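(* In the BBoxER framework described in the context, for fixed initial model $m_0$, seed $\omega$, algorithm $a$ and budget $b$, and any datasets $D_1,\dots,D_n$, $$\#\{\mathrm{BBoxER}(m_0,\omega,D_i,a,b): i\in\{1,\dots,n\}\}\le \sup_{D}\prod_{i=1}^b k_i(\omega,D,a,b).$$
   Context: $\mathrm{BBoxER}(m_0,\omega,D,a,b)$ is the model output by the following procedure: a black-box optimization algorithm $a$, deterministic given its seed $\omega$, is initialized from $\omega$; at each iteration $i=1,\dots,b$ it proposes a parameter $x_i$ and model $m_i=\mathrm{modified}(m_0,x_i)$ (for a fixed map $\mathrm{modified}$), declares a finite number $k_i=k_i(\omega,D,a,b)\ge1$ of possible comparison outcomes, and receives $\mathrm{choice}_i\in\{1,\dots,k_i\}$ computed by comparing $m_1,\dots,m_i$ on the dataset $D$; finally it recommends $\widehat x$ and outputs $\mathrm{modified}(m_0,\widehat x)$. The algorithm accesses $D$ only through the $\mathrm{choice}_i$, so $x_i,k_i$ are deterministic functions of $(\omega,a,b,\mathrm{choice}_1,\dots,\mathrm{choice}_{i-1})$ and $\widehat x$ is a deterministic function of $(\omega,a,b,\mathrm{choice}_1,\dots,\mathrm{choice}_b)$. The supremum is over all datasets. *)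

theory Defs
  imports Main "HOL-Library.Extended_Nat"
begin

text \<open>Abstract model of the BBoxER procedure.
  'x: parameters, 'm: models, 'd: datasets, 'w: seeds, 'a: algorithms.
  modified: the fixed map (m0, x) to modified model.
  propose w a b cs: parameter x_i proposed after receiving the choices cs = [choice_1,...,choice_(i-1)].
  arity w a b cs: number k_i of declared outcomes after choices cs.
  recommend w a b cs: recommended parameter after all b choices cs.
  compare D ms: outcome obtained by comparing models ms = [m_1,...,m_i] on dataset D.\<close>

fun bb_choices ::
  "('m \<Rightarrow> 'x \<Rightarrow> 'm) \<Rightarrow> ('w \<Rightarrow> 'a \<Rightarrow> nat \<Rightarrow> nat list \<Rightarrow> 'x)
   \<Rightarrow> ('d \<Rightarrow> 'm list \<Rightarrow> nat) \<Rightarrow> 'm \<Rightarrow> 'w \<Rightarrow> 'a \<Rightarrow> nat \<Rightarrow> 'd \<Rightarrow> nat \<Rightarrow> nat list" where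
  "bb_choices modified propose compare m0 w a b D 0 = []"
| "bb_choices modified propose compare m0 w a b D (Suc i) =
     (let cs = bb_choices modified propose compare m0 w a b D i;
          ms = map (\<lambda>j. modified m0 (propose w a b (take j cs))) [0..<Suc i]
      in cs @ [compare D ms])"

text \<open>k_i(w,D,a,b) for i = 1..b (here indexed by i-1).\<close>
definition bb_k where
  "bb_k modified propose arity compare m0 w a b D i =
     arity w a b (bb_choices modified propose compare m0 w a b D (i - 1))"

definition BBoxER where
  "BBoxER modified propose recommend compare m0 w a b D =
     modified m0 (recommend w a b (bb_choices modified propose compare m0 w a b D b))"

definition bb_valid where
  "bb_valid modified propose arity compare m0 w a b \<longleftrightarrow>
     (\<forall>D. \<forall>i\<in>{1..b}.
        bb_k modified propose arity compare m0 w a b D i \<ge> 1 \<and>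
        bb_choices modified propose compare m0 w a b D i ! (i - 1)
          \<in> {1..bb_k modified propose arity compare m0 w a b D i})"

end

theory Submission
  imports Defs
begin

context
  fixes modified :: "'m \<Rightarrow> 'x \<Rightarrow> 'm"
    and propose :: "'w \<Rightarrow> 'a \<Rightarrow> nat \<Rightarrow> nat list \<Rightarrow> 'x"
    and arity :: "'w \<Rightarrow> 'a \<Rightarrow> nat \<Rightarrow> nat list \<Rightarrow> nat"
    and compare :: "'d \<Rightarrow> 'm list \<Rightarrow> nat"
    and m0 :: 'm and w :: 'w and a :: 'a and b :: nat
begin

abbreviation "ch D i \<equiv> bb_choices modified propose compare m0 w a b D i"
abbreviation "kk D i \<equiv> bb_k modified propose arity compare m0 w a b D i"

lemma ch_len: "length (ch D i) = i"
  by (induction i) (auto simp: Let_def)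

lemma ch_snoc: "\<exists>x. ch D (Suc i) = ch D i @ [x]"
  by (simp add: Let_def)

lemma ch_take: "i \<le> j \<Longrightarrow> take i (ch D j) = ch D i"
proof (induction j)
  case 0 then show ?case by simp
next
  case (Suc j)
  show ?case
  proof (cases "i = Suc j")
    case True then show ?thesis using ch_len[of D "Suc j"] by simp
  next
    case False
    then have "i \<le> j" using Suc by simp
    obtain x where "ch D (Suc j) = ch D j @ [x]" using ch_snoc by blast
    then show ?thesis using Suc.IH[OF \<open>i \<le> j\<close>] ch_len[of D j] \<open>i \<le> j\<close> by simp
  qed
qed

lemma ch_Suc_eq: "ch D (Suc i) = ch D i @ [ch D (Suc i) ! i]"
proof -
  obtain x where "ch D (Suc i) = ch D i @ [x]" using ch_snoc by blast
  then show ?thesis using ch_len[of D i] by (metis nth_append_length)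
qed

lemma main:
  assumes valid: "bb_valid modified propose arity compare m0 w a b"
  shows "finite X \<Longrightarrow> X \<noteq> {} \<Longrightarrow> i \<le> b \<Longrightarrow> (\<forall>D\<in>X. ch D i = p) \<Longrightarrow>
    \<exists>D\<in>X. card ((\<lambda>D. ch D b) ` X) \<le> (\<Prod>l\<in>{Suc i..b}. kk D l)"
proof (induction "b - i" arbitrary: i X p)
  case 0
  then have ib: "i = b" by simp
  from 0 obtain D where "D \<in> X" by blast
  have "(\<lambda>D. ch D b) ` X = {p}" using 0 ib \<open>D \<in> X\<close> by auto
  moreover have "{Suc i..b} = {}" using ib by simp
  ultimately show ?case using \<open>D \<in> X\<close> by (intro bexI[of _ D]) simp_all
next
  case (Suc d)
  have ib: "i < b" using Suc by simp
  define k where "k = arity w a b p"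
  have kD: "kk D (Suc i) = k" if "D \<in> X" for D
    using Suc.prems(4) that by (simp add: bb_k_def k_def)
  define Xc where "Xc c = {D\<in>X. ch D (Suc i) ! i = c}" for c
  have cover: "X = (\<Union>c\<in>{1..k}. Xc c)"
  proof -
    have "ch D (Suc i) ! i \<in> {1..k}" if "D \<in> X" for D
    proof -
      have "Suc i \<in> {1..b}" using ib by simp
      then have "ch D (Suc i) ! (Suc i - 1) \<in> {1..kk D (Suc i)}"
        using valid unfolding bb_valid_def by blast
      then show ?thesis using kD[OF that] by simp
    qed
    then show ?thesis unfolding Xc_def by auto
  qed
  define P where "P D = (\<Prod>l\<in>{Suc (Suc i)..b}. kk D l)" for D
  have finX: "finite X" by fact
  define M where "M = Max (P ` X)"
  have bnd: "card ((\<lambda>D. ch D b) ` Xc c) \<le> M" for c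
  proof (cases "Xc c = {}")
    case True then show ?thesis by simp
  next
    case False
    have "\<forall>D\<in>Xc c. ch D (Suc i) = p @ [c]"
    proof
      fix D assume "D \<in> Xc c"
      then have "D \<in> X" "ch D (Suc i) ! i = c" unfolding Xc_def by auto
      then show "ch D (Suc i) = p @ [c]" using Suc.prems(4) ch_Suc_eq[of D i] by simp
    qed
    moreover have "finite (Xc c)" using finX unfolding Xc_def by simp
    moreover have "d = b - Suc i" using Suc.hyps(2) by simp
    ultimately obtain D where D: "D \<in> Xc c"
      "card ((\<lambda>D. ch D b) ` Xc c) \<le> (\<Prod>l\<in>{Suc (Suc i)..b}. kk D l)"
      using Suc.hyps(1)[of "Suc i" "Xc c" "p @ [c]"] False ib by auto
    have "D \<in> X" using D(1) unfolding Xc_def by simp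
    then have "P D \<le> M" unfolding M_def using finX by simp
    then show ?thesis using D(2) unfolding P_def by simp
  qed
  have "card ((\<lambda>D. ch D b) ` X) = card (\<Union>c\<in>{1..k}. (\<lambda>D. ch D b) ` Xc c)"
    by (subst cover) (simp add: image_UN)
  also have "\<dots> \<le> (\<Sum>c\<in>{1..k}. card ((\<lambda>D. ch D b) ` Xc c))"
    by (rule card_UN_le) simp
  also have "\<dots> \<le> (\<Sum>c\<in>{1..k}. M)"
    by (rule sum_mono) (rule bnd)
  also have "\<dots> = k * M" by simp
  finally have c1: "card ((\<lambda>D. ch D b) ` X) \<le> k * M" .
  have "M \<in> P ` X" unfolding M_def using finX Suc.prems(2) by (intro Max_in) auto
  then obtain D0 where D0: "D0 \<in> X" "M = P D0" by auto
  have "(\<Prod>l\<in>{Suc i..b}. kk D0 l) = kk D0 (Suc i) * P D0"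
    unfolding P_def using ib by (simp add: prod.atLeast_Suc_atMost)
  then have "(\<Prod>l\<in>{Suc i..b}. kk D0 l) = k * M" using kD[OF D0(1)] D0(2) by simp
  then show ?case using c1 D0(1) by (intro bexI[of _ D0]) simp_all
qed

end

theorem theorem5:
  fixes modified :: "'m \<Rightarrow> 'x \<Rightarrow> 'm"
    and propose recommend :: "'w \<Rightarrow> 'a \<Rightarrow> nat \<Rightarrow> nat list \<Rightarrow> 'x"
    and arity :: "'w \<Rightarrow> 'a \<Rightarrow> nat \<Rightarrow> nat list \<Rightarrow> nat"
    and compare :: "'d \<Rightarrow> 'm list \<Rightarrow> nat"
    and m0 :: 'm and w :: 'w and a :: 'a and b n :: nat
    and Ds :: "nat \<Rightarrow> 'd"
  assumes "bb_valid modified propose arity compare m0 w a b"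
  shows "enat (card ((\<lambda>i. BBoxER modified propose recommend compare m0 w a b (Ds i)) ` {1..n}))
         \<le> (SUP D. enat (\<Prod>i\<in>{1..b}. bb_k modified propose arity compare m0 w a b D i))"
proof (cases "n = 0")
  case True then show ?thesis by (simp add: zero_enat_def[symmetric])
next
  case False
  define X where "X = Ds ` {1..n}"
  have "finite X" "X \<noteq> {}" using False unfolding X_def by auto
  then obtain D where D: "D \<in> X" "card ((\<lambda>D. bb_choices modified propose compare m0 w a b D b) ` X)
      \<le> (\<Prod>l\<in>{Suc 0..b}. bb_k modified propose arity compare m0 w a b D l)"
    using main[OF assms, of X 0 "[]"] by auto
  have "(\<lambda>i. BBoxER modified propose recommend compare m0 w a b (Ds i)) ` {1..n}
      = (\<lambda>cs. modified m0 (recommend w a b cs)) ` ((\<lambda>D. bb_choices modified propose compare m0 w a b D b) ` X)"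
    unfolding X_def BBoxER_def by (simp add: image_image)
  then have "card ((\<lambda>i. BBoxER modified propose recommend compare m0 w a b (Ds i)) ` {1..n})
      \<le> (\<Prod>l\<in>{1..b}. bb_k modified propose arity compare m0 w a b D l)"
    using D(2) card_image_le[of "(\<lambda>D. bb_choices modified propose compare m0 w a b D b) ` X"
      "\<lambda>cs. modified m0 (recommend w a b cs)"] \<open>finite X\<close> by (simp add: One_nat_def)
  then show ?thesis
    by (meson SUP_upper2 UNIV_I enat_ord_simps(1))
qed

end
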